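(* There is an absolute constant $c>0$ such that for all integers $\sigma\ge1$ and $n$ with $\sigma<n-1$, and every string $T\in[1..\sigma]^{n-1}\#$, the number of arcs of $\mathsf{CDAWG}_T$, namely $|\mathcal{E}^r_T|+|\mathcal{F}^r_T|$, is at least $c\log n$.
   Context: Let $\#=0\notin[1..\sigma]$ and $T\in[1..\sigma]^{n-1}\#$. For a string $W$, $\mathcal{P}_T(W)$ is the set of starting positions of occurrences of $W$ in circular $T$; $\Sigma^{\ell}_T(W)=\{a: \mathcal{P}_T(aW)\neq\emptyset\}$, $\Sigma^{r}_T(W)=\{b:\mathcal{P}_T(Wb)\ne\emptyset\}$. A repeat is a string $W$ (possibly empty) with $|\mathcal{P}_T(W)|>1$; right-maximal iff $|\Sigma^r_T(W)|>1$, left-maximal iff $|\Sigma^\ell_T(W)|>1$, maximal repeat iff both; $\mathcal{M}_T$ is the set of maximal repeats. $\mathsf{ST}_T$ is the suffix tree of $T$, $\ell(v)$ the label of node $v$. $\mathcal{E}^r_T$ (resp. $\mathcal{F}^r_T$) is the set of edges $(v,w)$ of $\mathsf{ST}_T$ with $v=\mathrm{parent}(w)$, $\ell(v)\in\mathcal{M}_T$ and $\ell(w)\in\mathcal{M}_T$ (resp. $\ell(w)\notin\mathcal{M}_T$). The compact directed acyclic word graph $\mathsf{CDAWG}_T$ is the minimal compact automaton of the suffixes of $T$; its nodes are the maximal repeats of $T$ (the empty string being the source) plus one sink, and its arcs are in one-to-one correspondence with $\mathcal{E}^r_T\cup\mathcal{F}^r_T$ (equivalently, with pairs $(W,b)$,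 $W\in\mathcal{M}_T$, $b\in\Sigma^r_T(W)$). *)

theory Defs
  imports Complex_Main
begin

text \<open>Strings are lists of naturals; the terminator # is 0.
  T is read circularly (length T = n).\<close>

definition occ :: "nat list \<Rightarrow> nat list \<Rightarrow> nat set" where
  "occ T W = {i. i < length T \<and>
      (\<forall>j < length W. T ! ((i + j) mod length T) = W ! j)}"

definition left_ext :: "nat list \<Rightarrow> nat list \<Rightarrow> nat set" where
  "left_ext T W = {a. occ T (a # W) \<noteq> {}}"

definition right_ext :: "nat list \<Rightarrow> nat list \<Rightarrow> nat set" where
  "right_ext T W = {b. occ T (W @ [b]) \<noteq> {}}"

definition is_repeat :: "nat list \<Rightarrow> nat list \<Rightarrow> bool" where
  "is_repeat T W \<longleftrightarrow> card (occ T W) > 1"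

definition maximal_repeats :: "nat list \<Rightarrow> nat list set" where
  "maximal_repeats T = {W. is_repeat T W \<and> card (right_ext T W) > 1
                           \<and> card (left_ext T W) > 1}"

text \<open>Arcs of the CDAWG: in bijection with pairs (W,b), W maximal repeat,
  b a right extension of W (equivalently, edges in E^r_T \<union> F^r_T).\<close>
definition cdawg_arcs :: "nat list \<Rightarrow> (nat list \<times> nat) set" where
  "cdawg_arcs T = {(W, b). W \<in> maximal_repeats T \<and> b \<in> right_ext T W}"

definition valid_text :: "nat \<Rightarrow> nat \<Rightarrow> nat list \<Rightarrow> bool" where
  "valid_text \<sigma> n T \<longleftrightarrow> length T = n \<and> n \<ge> 1 \<and> T ! (n - 1) = 0 \<and>
     (\<forall>i < n - 1. T ! i \<in> {1..\<sigma>})"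

end

theory Submission imports Defs "HOL-Library.Sublist"
begin

definition tt :: "nat list \<Rightarrow> nat \<Rightarrow> nat" where "tt T x = T ! (x mod length T)"

lemma occ_tt: "occ T W = {i. i < length T \<and> (\<forall>j<length W. tt T (i+j) = W!j)}"
  by (simp add: occ_def tt_def)

lemma tt_mod: "tt T (x mod length T + y) = tt T (x + y)"
  by (simp add: tt_def mod_add_left_eq)

lemma tt_n: "tt T (x + length T) = tt T x"
  by (simp add: tt_def)

lemma tt_in: "T \<noteq> [] \<Longrightarrow> tt T x \<in> set T"
  by (simp add: tt_def)

lemma occ_sub: "occ T W \<subseteq> {..<length T}"
  by (auto simp: occ_tt)

lemma occ_fin: "finite (occ T W)"
  using occ_sub finite_subset by blast

lemma occ_app: "occ T (X @ Y) \<subseteq> occ T X"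
  by (auto simp: occ_tt nth_append)

lemma mod_inj1: assumes "k1 < (n::nat)" "k2 < n" "(k1 + a) mod n = (k2 + a) mod n" "k1 \<le> k2"
  shows "k1 = k2"
proof (rule ccontr)
  assume "k1 \<noteq> k2"
  have "n dvd (k2+a) - (k1+a)" using mod_eq_dvd_iff_nat[of "k1+a" "k2+a" n] assms by simp
  hence d: "n dvd k2 - k1" by simp
  have "0 < k2 - k1" using \<open>k1 \<noteq> k2\<close> assms(4) by simp
  hence "n \<le> k2 - k1" using dvd_imp_le d by blast
  with assms show False by simp
qed

lemma mod_inj: "k1 < (n::nat) \<Longrightarrow> k2 < n \<Longrightarrow> (k1 + a) mod n = (k2 + a) mod n \<Longrightarrow> k1 = k2"
  using mod_inj1[of k1 n k2 a] mod_inj1[of k2 n k1 a] by (cases "k1 \<le> k2") auto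

lemma shift_in: assumes "T \<noteq> []" "k \<in> occ T (\<alpha> @ X)" shows "(k + length \<alpha>) mod length T \<in> occ T X"
proof -
  have k: "k < length T" and h: "\<forall>j<length (\<alpha> @ X). tt T (k+j) = (\<alpha> @ X)!j" using assms by (auto simp: occ_tt)
  have "\<forall>j<length X. tt T ((k + length \<alpha>) mod length T + j) = X!j"
  proof (intro allI impI)
    fix j assume "j < length X"
    hence "tt T (k + (length \<alpha> + j)) = (\<alpha> @ X) ! (length \<alpha> + j)" using h by simp
    then show "tt T ((k + length \<alpha>) mod length T + j) = X!j" by (simp add: tt_mod add.assoc)
  qed
  then show ?thesis using assms(1) by (simp add: occ_tt)
qed

lemma shift_inj: "inj_on (\<lambda>k. (k + length \<alpha>) mod length T) (occ T W)"
  using occ_sub mod_inj unfolding inj_on_def by (metis lessThan_iff subsetD)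

lemma card_shift: "T \<noteq> [] \<Longrightarrow> card (occ T (\<alpha> @ X)) \<le> card (occ T X)"
    apply (rule card_inj_on_le[OF shift_inj[of \<alpha>]])
  using shift_in occ_fin by auto

lemma card_app: "card (occ T (X @ Y)) \<le> card (occ T X)"
  by (simp add: card_mono occ_app occ_fin)

lemma right_ext_sub: "T \<noteq> [] \<Longrightarrow> right_ext T W \<subseteq> set T"
proof
  fix b assume "T \<noteq> []" "b \<in> right_ext T W"
  then obtain k where "k \<in> occ T (W @ [b])" by (auto simp: right_ext_def)
  then have "tt T (k + length W) = b" by (auto simp: occ_tt nth_append)
  then show "b \<in> set T" using tt_in \<open>T \<noteq> []\<close> by metis
qed

lemma left_ext_sub: "T \<noteq> [] \<Longrightarrow> left_ext T W \<subseteq> set T"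
proof
  fix b assume "T \<noteq> []" "b \<in> left_ext T W"
  then obtain k where "k \<in> occ T (b # W)" by (auto simp: left_ext_def)
  then have "tt T (k + 0) = b" by (auto simp: occ_tt)
  then show "b \<in> set T" using tt_in \<open>T \<noteq> []\<close> by metis
qed

lemma drop_occ: "i < length T \<Longrightarrow> drop i T = U @ rest \<Longrightarrow> i \<in> occ T U"
proof -
  assume a: "i < length T" "drop i T = U @ rest"
  have "\<forall>j<length U. tt T (i+j) = U!j"
  proof (intro allI impI)
    fix j assume "j < length U"
    hence "i + j < length T" using a by (metis add.commute length_append length_drop less_diff_conv trans_less_add1)
    hence "tt T (i+j) = drop i T ! j" by (simp add: tt_def)
    then show "tt T (i+j) = U!j" using a \<open>j < length U\<close> by (simp add: nth_append)
  qed
  then show ?thesis using a by (simp add: occ_tt)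
qed


lemma two_elems: "card A > 1 \<Longrightarrow> \<exists>x\<in>A. \<exists>y\<in>A. x \<noteq> y"
  by (metis One_nat_def card.infinite card_le_Suc0_iff_eq not_less not_one_less_zero)

lemma rep_len:
  assumes n: "length T = n" "1 \<le> n" and z: "T!(n-1) = 0" and nz: "\<forall>i<n-1. T!i \<noteq> 0"
    and c: "card (occ T W) > 1"
  shows "length W < n"
proof (rule ccontr)
  assume "\<not> length W < n"
  obtain k1 k2 where k: "k1 \<in> occ T W" "k2 \<in> occ T W" "k1 \<noteq> k2" using two_elems[OF c] by blast
  have kn: "k1 < n" "k2 < n" using k n by (auto simp: occ_tt)
  define m where "m = n - 1 - k1"
  have "m < length W" using \<open>\<not> length W < n\<close> m_def kn by simp
  hence e1: "tt T (k1+m) = W!m" "tt T (k2+m) = W!m" using k by (auto simp: occ_tt)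
  have "k1 + m = n - 1" using m_def kn by simp
  hence "tt T (k1+m) = 0" using z n by (simp add: tt_def)
  hence "T ! ((k2+m) mod n) = 0" using e1 n by (simp add: tt_def)
  moreover have "(k2+m) mod n < n" using n by simp
  ultimately have "(k2+m) mod n = n - 1" using nz by (metis One_nat_def Suc_pred' \<open>(k2 + m) mod n < n\<close> less_Suc_eq less_nat_zero_code not_gr_zero)
  also have "n - 1 = (k1 + m) mod n" using \<open>k1 + m = n - 1\<close> n by simp
  finally have "k1 = k2" using mod_inj kn by metis
  with k show False by simp
qed

lemma pre_in:
  assumes "length T = n" "1 \<le> n" "k \<in> occ T V"
  shows "(k + n - 1) mod n \<in> occ T (tt T (k + n - 1) # V)"
proof -
  have "\<forall>j<length (tt T (k + n - 1) # V). tt T ((k + n - 1) mod n + j) = (tt T (k + n - 1) # V) ! j"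
  proof (intro allI impI)
    fix j assume j: "j < length (tt T (k + n - 1) # V)"
    show "tt T ((k + n - 1) mod n + j) = (tt T (k + n - 1) # V) ! j"
    proof (cases j)
      case 0 then show ?thesis using tt_mod[of T "k+n-1" 0] assms by simp
    next
      case (Suc j')
      have "tt T ((k + n - 1) mod n + j) = tt T (k + n - 1 + j)" using tt_mod[of T "k+n-1" j] assms by simp
      also have "k + n - 1 + j = (k + j') + length T" using Suc assms by simp
      finally have "tt T ((k + n - 1) mod n + j) = tt T (k + j')" by (simp add: tt_n)
      also have "\<dots> = V ! j'" using assms(3) Suc j by (simp add: occ_tt)
      finally show ?thesis using Suc by simp
    qed
  qed
  then show ?thesis using assms by (simp add: occ_tt)
qed


lemma exM:
  assumes n: "length T = n" "1 \<le> n" and z: "T!(n-1) = 0" and nz: "\<forall>i<n-1. T!i \<noteq> 0"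
    and c: "card (occ T P) > 1" and r: "card (right_ext T P) > 1"
  shows "\<exists>W. W \<in> maximal_repeats T \<and> card (occ T W) = card (occ T P) \<and> right_ext T P \<subseteq> right_ext T W"
proof -
  have Tne: "T \<noteq> []" using n by auto
  define Q where "Q l = (\<exists>\<alpha>. length \<alpha> = l \<and> card (occ T (\<alpha>@P)) = card (occ T P))" for l
  have Q0: "Q 0" unfolding Q_def by auto
  have Qb: "\<forall>l. Q l \<longrightarrow> l \<le> n"
  proof (intro allI impI)
    fix l assume "Q l"
    then obtain \<alpha> where "length \<alpha> = l" "card (occ T (\<alpha>@P)) = card (occ T P)" unfolding Q_def by blast
    then show "l \<le> n" using rep_len[OF n z nz, of "\<alpha>@P"] c by simp
  qed
  obtain l where Ql: "Q l" and lmax: "\<forall>y. Q y \<longrightarrow> y \<le> l" using Nat.ex_has_greatest_nat[OF Q0 Qb] by blast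
  obtain \<alpha> where al: "length \<alpha> = l" and ceq: "card (occ T (\<alpha>@P)) = card (occ T P)" using Ql unfolding Q_def by blast
  define V where "V = \<alpha> @ P"
  define s where "s k = (k + length \<alpha>) mod n" for k
  have simg: "s ` occ T V \<subseteq> occ T P" using shift_in[OF Tne] n unfolding s_def V_def by auto
  have sinj: "inj_on s (occ T V)" using shift_inj[of \<alpha> T V] n unfolding s_def by simp
  have "card (s ` occ T V) = card (occ T P)" using card_image[OF sinj] ceq V_def by simp
  hence seq: "s ` occ T V = occ T P" using card_subset_eq[OF occ_fin simg] by simp
  have rsub: "right_ext T P \<subseteq> right_ext T V"
  proof
    fix b assume "b \<in> right_ext T P"
    then obtain k where k: "k \<in> occ T (P @ [b])" unfolding right_ext_def by blast
    hence "k \<in> occ T P" using occ_app by blast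
    then obtain k' where k': "k' \<in> occ T V" "k = s k'" using seq by blast
    have kb: "tt T (k + length P) = b" using k by (auto simp: occ_tt nth_append)
    have "\<forall>j<length (V @ [b]). tt T (k' + j) = (V @ [b]) ! j"
    proof (intro allI impI)
      fix j assume "j < length (V @ [b])"
      then consider "j < length V" | "j = length V" by fastforce
      then show "tt T (k' + j) = (V @ [b]) ! j"
      proof cases
        case 1 then show ?thesis using k' by (auto simp: occ_tt nth_append)
      next
        case 2
        have "tt T (k' + j) = tt T (s k' + length P)" using 2 n tt_mod[of T "k' + length \<alpha>" "length P"] unfolding s_def V_def
          by (simp add: add.assoc)
        then show ?thesis using 2 kb k' by simp
      qed
    qed
    hence "k' \<in> occ T (V @ [b])" using k' by (simp add: occ_tt)
    then show "b \<in> right_ext T V" unfolding right_ext_def by blast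
  qed
  have fin_r: "finite (right_ext T V)" using right_ext_sub[OF Tne] finite_subset by blast
  have rV: "card (right_ext T V) > 1" using card_mono[OF fin_r rsub] r by simp
  have cV: "card (occ T V) > 1" using ceq c V_def by simp
  have lV: "card (left_ext T V) > 1"
  proof (rule ccontr)
    assume le: "\<not> card (left_ext T V) > 1"
    have fin_l: "finite (left_ext T V)" using left_ext_sub[OF Tne] finite_subset by blast
    obtain k0 where k0: "k0 \<in> occ T V" using cV by (metis card.empty ex_in_conv not_less_zero)
    define a where "a = tt T (k0 + n - 1)"
    have lin: "\<And>k. k \<in> occ T V \<Longrightarrow> tt T (k + n - 1) \<in> left_ext T V"
      using pre_in[OF n] unfolding left_ext_def by blast
    have all_a: "\<And>k. k \<in> occ T V \<Longrightarrow> tt T (k + n - 1) = a"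
      using lin k0 le fin_l card_le_Suc0_iff_eq unfolding a_def
      by (metis One_nat_def not_less)
    define p where "p k = (k + (n - 1)) mod n" for k
    have pimg: "p ` occ T V \<subseteq> occ T (a # V)"
      using pre_in[OF n] all_a n unfolding p_def by (smt (verit) Nat.add_diff_assoc image_subset_iff)
    have pinj: "inj_on p (occ T V)" using occ_sub mod_inj n unfolding inj_on_def p_def
      by (metis lessThan_iff subsetD)
    have "card (occ T V) \<le> card (occ T (a # V))" using card_inj_on_le[OF pinj pimg occ_fin] .
    moreover have "card (occ T (a # V)) \<le> card (occ T V)" using card_shift[OF Tne, of "[a]" V] by simp
    ultimately have "card (occ T ((a # \<alpha>) @ P)) = card (occ T P)" using ceq V_def by simp
    hence "Q (Suc l)" unfolding Q_def using al by (metis length_Cons)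
    with lmax show False by fastforce
  qed
  have "V \<in> maximal_repeats T" using rV cV lV unfolding maximal_repeats_def is_repeat_def by simp
  then show ?thesis using ceq V_def rsub by blast
qed


lemma fin_arcs:
  assumes n: "length T = n" "1 \<le> n" and z: "T!(n-1) = 0" and nz: "\<forall>i<n-1. T!i \<noteq> 0"
  shows "finite (cdawg_arcs T)"
proof -
  have Tne: "T \<noteq> []" using n by auto
  have "maximal_repeats T \<subseteq> {W. set W \<subseteq> set T \<and> length W \<le> n}"
  proof
    fix W assume W: "W \<in> maximal_repeats T"
    hence c: "card (occ T W) > 1" by (simp add: maximal_repeats_def is_repeat_def)
    obtain k where k: "k \<in> occ T W" using c by (metis card.empty ex_in_conv not_less_zero)
    have "set W \<subseteq> set T"
    proof
      fix x assume "x \<in> set W"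
      then obtain j where "j < length W" "x = W!j" by (metis in_set_conv_nth)
      hence "x = tt T (k+j)" using k by (simp add: occ_tt)
      then show "x \<in> set T" using tt_in[OF Tne] by simp
    qed
    then show "W \<in> {W. set W \<subseteq> set T \<and> length W \<le> n}" using rep_len[OF n z nz c] by simp
  qed
  hence "finite (maximal_repeats T)" using finite_lists_length_le[of "set T" n] finite_subset by blast
  moreover have "cdawg_arcs T \<subseteq> maximal_repeats T \<times> set T"
    using right_ext_sub[OF Tne] unfolding cdawg_arcs_def by auto
  ultimately show ?thesis by (meson finite_SigmaI finite_set finite_subset)
qed

lemma not_prefix_drop:
  assumes n: "length T = n" "1 \<le> n" and z: "T!(n-1) = 0" and nz: "\<forall>i<n-1. T!i \<noteq> 0"
    and ij: "i < n" "j < n" "i \<noteq> j"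
  shows "\<not> prefix (drop i T) (drop j T)"
proof
  assume "prefix (drop i T) (drop j T)"
  then obtain zs where e: "drop j T = drop i T @ zs" by (auto simp: prefix_def)
  hence "n - i \<le> n - j" using n by (metis le_add1 length_append length_drop)
  hence ji: "j < i" using ij by simp
  have p: "n - 1 - i < length (drop i T)" using n ij by simp
  have "drop j T ! (n - 1 - i) = drop i T ! (n - 1 - i)" using e p by (simp add: nth_append)
  also have "\<dots> = 0" using z ij n by simp
  finally have "T ! (j + (n - 1 - i)) = 0" using n ij by simp
  moreover have "j + (n - 1 - i) < n - 1" using ji ij by simp
  ultimately show False using nz by blast
qed


definition Aset :: "nat list \<Rightarrow> nat \<Rightarrow> (nat list \<times> nat) set" where
  "Aset T i = {x. x \<in> cdawg_arcs T \<and> (\<exists>U rest. drop i T = U @ snd x # rest \<and>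
      card (right_ext T U) > 1 \<and> card (occ T (fst x)) = card (occ T U))}"

lemma Aset_iff: "(W, b) \<in> Aset T i \<longleftrightarrow> (W, b) \<in> cdawg_arcs T \<and> (\<exists>U rest. drop i T = U @ b # rest \<and>
      card (right_ext T U) > 1 \<and> card (occ T W) = card (occ T U))"
  by (simp only: Aset_def mem_Collect_eq fst_conv snd_conv)

lemma A_inj:
  assumes n: "length T = n" "1 \<le> n" and z: "T!(n-1) = 0" and nz: "\<forall>i<n-1. T!i \<noteq> 0"
    and ij: "i < n" "j < n" "i \<noteq> j"
  shows "Aset T i \<noteq> Aset T j"
proof -
  have Tne: "T \<noteq> []" using n by auto
  have "drop i T \<parallel> drop j T"
    using not_prefix_drop[OF n z nz ij] not_prefix_drop[OF n z nz ij(2,1)] ij(3) by auto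
  then obtain P b1 r1 b2 r2 where b: "b1 \<noteq> b2" and di: "drop i T = P @ b1 # r1"
    and dj: "drop j T = P @ b2 # r2" using parallel_decomp by blast
  have oi: "i \<in> occ T (P @ [b1])" using drop_occ[of i T "P @ [b1]" r1] di ij n by simp
  have oj: "j \<in> occ T (P @ [b2])" using drop_occ[of j T "P @ [b2]" r2] dj ij n by simp
  have "{i, j} \<subseteq> occ T P" using oi oj occ_app by blast
  hence "card {i, j} \<le> card (occ T P)" using card_mono[OF occ_fin] by blast
  hence cP: "card (occ T P) > 1" using ij(3) by simp
  have "{b1, b2} \<subseteq> right_ext T P" using oi oj unfolding right_ext_def by blast
  moreover have "finite (right_ext T P)" using right_ext_sub[OF Tne] finite_subset by blast
  ultimately have "card {b1, b2} \<le> card (right_ext T P)" using card_mono by blast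
  hence rP: "card (right_ext T P) > 1" using b by simp
  obtain W where W: "W \<in> maximal_repeats T" "card (occ T W) = card (occ T P)"
    "right_ext T P \<subseteq> right_ext T W" using exM[OF n z nz cP rP] by blast
  have b1W: "b1 \<in> right_ext T W" using W(3) oi unfolding right_ext_def by blast
  have arc: "(W, b1) \<in> cdawg_arcs T" using W(1) b1W by (simp add: cdawg_arcs_def)
  have "\<exists>U rest. drop i T = U @ b1 # rest \<and> card (right_ext T U) > 1 \<and> card (occ T W) = card (occ T U)"
    by (rule exI[of _ P], rule exI[of _ r1]) (use di rP W(2) in simp)
  hence inA: "(W, b1) \<in> Aset T i" using arc Aset_iff by blast
  have "(W, b1) \<notin> Aset T j"
  proof
    assume "(W, b1) \<in> Aset T j"
    then obtain U rest where U: "drop j T = U @ b1 # rest" "card (right_ext T U) > 1"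
      "card (occ T W) = card (occ T U)" unfolding Aset_iff by blast
    have cU: "card (occ T U) = card (occ T P)" using U(3) W(2) by simp
    have eq: "U @ b1 # rest = P @ b2 # r2" using U(1) dj by simp
    consider "length U = length P" | "length U < length P" | "length P < length U" by linarith
    then show False
    proof cases
      case 1 then show False using eq b by simp
    next
      case 2
      have "take (length U) (U @ b1 # rest) = take (length U) (P @ b2 # r2)" using eq by simp
      hence tU: "take (length U) P = U" using 2 by simp
      have Pdec: "P = U @ drop (length U) P" using append_take_drop_id[of "length U" P] unfolding tU by simp
      have sub: "occ T P \<subseteq> occ T U" using occ_app[of T U "drop (length U) P"] Pdec by simp
      have oeq: "occ T P = occ T U" using card_subset_eq[OF occ_fin sub] cU by simp
      have "right_ext T U \<subseteq> {P ! length U}"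
      proof
        fix x assume "x \<in> right_ext T U"
        then obtain k where k: "k \<in> occ T (U @ [x])" unfolding right_ext_def by blast
        hence "tt T (k + length U) = x" by (auto simp: occ_tt nth_append)
        moreover have "k \<in> occ T P" using k occ_app oeq by blast
        ultimately show "x \<in> {P ! length U}" using 2 by (auto simp: occ_tt)
      qed
      hence "card (right_ext T U) \<le> card {P ! length U}" by (intro card_mono) simp_all
      hence "card (right_ext T U) \<le> 1" by simp
      then show False using U(2) by simp
    next
      case 3
      have "take (Suc (length P)) (U @ b1 # rest) = take (Suc (length P)) (P @ b2 # r2)" using eq by simp
      hence "take (Suc (length P)) U = P @ [b2]" using 3 by simp
      hence Udec: "(P @ [b2]) @ drop (Suc (length P)) U = U" using append_take_drop_id[of "Suc (length P)" U] by simp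
      have s1: "occ T U \<subseteq> occ T (P @ [b2])" using occ_app[of T "P @ [b2]" "drop (Suc (length P)) U"] unfolding Udec .
      have s2: "occ T (P @ [b2]) \<subseteq> occ T P" using occ_app by blast
      have "card (occ T P) \<le> card (occ T (P @ [b2]))" using card_mono[OF occ_fin s1] cU by simp
      moreover have "card (occ T (P @ [b2])) \<le> card (occ T P)" using card_mono[OF occ_fin s2] .
      ultimately have c2: "card (occ T (P @ [b2])) = card (occ T P)" by linarith
      have oeq: "occ T (P @ [b2]) = occ T P" using card_subset_eq[OF occ_fin s2 c2] .
      have "i \<in> occ T P" using oi occ_app[of T P "[b1]"] by blast
      hence "i \<in> occ T (P @ [b2])" unfolding oeq .
      hence "tt T (i + length P) = b2" by (auto simp: occ_tt nth_append)
      moreover have "tt T (i + length P) = b1" using oi by (auto simp: occ_tt nth_append)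
      ultimately show False using b by simp
    qed
  qed
  then show ?thesis using inA by blast
qed


theorem lemma4:
  "\<exists>c::real > 0. \<forall>\<sigma> n T. \<sigma> \<ge> 1 \<and> \<sigma> + 1 < n \<and> valid_text \<sigma> n T
      \<longrightarrow> real (card (cdawg_arcs T)) \<ge> c * ln (real n)"
proof (rule exI[of _ 1], intro conjI allI impI)
  show "(0::real) < 1" by simp
  fix \<sigma> n T assume a: "\<sigma> \<ge> 1 \<and> \<sigma> + 1 < n \<and> valid_text \<sigma> n T"
  have n: "length T = n" "1 \<le> n" and z: "T!(n-1) = 0" and nz: "\<forall>i<n-1. T!i \<noteq> 0"
    using a unfolding valid_text_def by (auto simp: atLeastAtMost_iff)
  define e where "e = card (cdawg_arcs T)"
  have fin: "finite (cdawg_arcs T)" using fin_arcs[OF n z nz] .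
  have inj: "inj_on (Aset T) {..<n}" unfolding inj_on_def using A_inj[OF n z nz] by blast
  have img: "Aset T ` {..<n} \<subseteq> Pow (cdawg_arcs T)" unfolding Aset_def by auto
  have "card {..<n} \<le> card (Pow (cdawg_arcs T))"
    using card_inj_on_le[OF inj img] fin by simp
  hence "n \<le> 2 ^ e" using card_Pow[OF fin] e_def by simp
  hence "real n \<le> 2 ^ e" by (metis of_nat_le_iff of_nat_numeral of_nat_power)
  hence "ln (real n) \<le> ln (2 ^ e)" using n by (intro ln_mono) auto
  also have "\<dots> = real e * ln 2" by (simp add: ln_realpow)
  also have "\<dots> \<le> real e" using ln_2_less_1 by (simp add: mult_left_le)
  finally show "1 * ln (real n) \<le> real (card (cdawg_arcs T))" using e_def by simp
qed

end
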